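(* Let $C\subset\mathbb{R}^2$ be a strictly convex body and $S\subset\mathbb{R}^2$ a finite point set in $C$-general position. Let $C'$ be a homothet of $C$ whose boundary contains exactly two points $p,q$ of $S$. Then $p$ and $q$ are joined by a path in $D_C(S)$ (with edges drawn as straight segments) that lies entirely in $C'$.
   Context: A convex body is a convex compact set with nonempty interior; it is strictly convex if its boundary contains no segment of positive length. A homothet of $C$ is $\lambda C+x$ with $\lambda>0$. $S$ is in $C$-general position if the boundary of every homothet of $C$ contains at most $4$ points of $S$. The Delaunay graph $D_C(S)$ has vertex set $S$, with $p,q$ adjacent iff some homothet of $C$ contains $p$ and $q$ and no other point of $S$. *)

theory Defs
  imports "HOL-Analysis.Analysis"
begin

definition convex_body :: "(real^2) set \<Rightarrow> bool" where
  "convex_body C \<longleftrightarrow> convex C \<and> compact C \<and> interior C \<noteq> {}"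

definition strictly_convex_body :: "(real^2) set \<Rightarrow> bool" where
  "strictly_convex_body C \<longleftrightarrow> convex_body C \<and>
     (\<forall>a b. closed_segment a b \<subseteq> frontier C \<longrightarrow> a = b)"

definition is_homothet :: "(real^2) set \<Rightarrow> (real^2) set \<Rightarrow> bool" where
  "is_homothet C H \<longleftrightarrow> (\<exists>l x. l > 0 \<and> H = (\<lambda>v. l *\<^sub>R v + x) ` C)"

definition C_general_position :: "(real^2) set \<Rightarrow> (real^2) set \<Rightarrow> bool" where
  "C_general_position C S \<longleftrightarrow>
     (\<forall>H. is_homothet C H \<longrightarrow> finite (frontier H \<inter> S) \<and> card (frontier H \<inter> S) \<le> 4)"

definition delaunay_adj :: "(real^2) set \<Rightarrow> (real^2) set \<Rightarrow> real^2 \<Rightarrow> real^2 \<Rightarrow> bool" where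
  "delaunay_adj C S p q \<longleftrightarrow> p \<in> S \<and> q \<in> S \<and> p \<noteq> q \<and>
     (\<exists>H. is_homothet C H \<and> H \<inter> S = {p, q})"

end

theory Submission
  imports Defs
begin


lemma open_img_aff:
  fixes S :: "(real^2) set"
  assumes "l \<noteq> 0" "open S"
  shows "open ((\<lambda>v. l *\<^sub>R v + b) ` S)"
proof -
  have "(\<lambda>v. l *\<^sub>R v + b) ` S = (\<lambda>x. b + x) ` ((\<lambda>x. l *\<^sub>R x) ` S)"
    by (auto simp: image_image add.commute)
  then show ?thesis using assms open_translation open_scaling by metis
qed

lemma int_img_aff1:
  fixes S :: "(real^2) set"
  assumes "l \<noteq> 0"
  shows "(\<lambda>v. l *\<^sub>R v + b) ` interior S \<subseteq> interior ((\<lambda>v. l *\<^sub>R v + b) ` S)"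
  by (intro interior_maximal open_img_aff assms open_interior image_mono interior_subset)

lemma int_img_aff2:
  fixes S :: "(real^2) set"
  assumes "l \<noteq> 0" "y \<in> interior ((\<lambda>v. l *\<^sub>R v + b) ` S)"
  shows "\<exists>y'. y = l *\<^sub>R y' + b \<and> y' \<in> interior S"
proof -
  have "inj (\<lambda>v. l *\<^sub>R v + b)" using assms(1) by (auto simp: inj_on_def)
  moreover have "\<And>x. continuous (at x) (\<lambda>v. l *\<^sub>R v + b)" by (intro continuous_intros)
  ultimately show ?thesis using interior_image_subset assms(2) by blast
qed

lemma hom_comp:
  assumes "is_homothet C D" "l > 0"
  shows "is_homothet C ((\<lambda>v. l *\<^sub>R v + b) ` D)"
proof -
  obtain l0 x0 where h: "l0 > 0" "D = (\<lambda>v. l0 *\<^sub>R v + x0) ` C"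
    using assms unfolding is_homothet_def by auto
  have "(\<lambda>v. l *\<^sub>R v + b) ` D = (\<lambda>v. (l*l0) *\<^sub>R v + (l *\<^sub>R x0 + b)) ` C"
    unfolding h image_image by (simp add: algebra_simps)
  then show ?thesis unfolding is_homothet_def using h assms by (metis mult_pos_pos)
qed

definition MP :: "(real^2) set \<Rightarrow> bool" where
  "MP D \<longleftrightarrow> (\<forall>y m. y \<in> D \<longrightarrow> m \<in> D \<longrightarrow> y \<noteq> m \<longrightarrow> midpoint y m \<in> interior D)"

lemma MP_C:
  assumes "strictly_convex_body C"
  shows "MP C"
  unfolding MP_def
proof (intro allI impI)
  fix y m assume y: "y \<in> C" and m: "m \<in> C" and ne: "y \<noteq> m"
  have cv: "convex C" and cp: "compact C" and ni: "interior C \<noteq> {}"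
    and sc: "\<And>a b. closed_segment a b \<subseteq> frontier C \<Longrightarrow> a = b"
    using assms unfolding strictly_convex_body_def convex_body_def by auto
  have cl: "closed C" using cp compact_imp_closed by auto
  show "midpoint y m \<in> interior C"
  proof (rule ccontr)
    assume nz: "midpoint y m \<notin> interior C"
    let ?z = "midpoint y m"
    have "?z = (1/2) *\<^sub>R y + (1/2) *\<^sub>R m" by (simp add: midpoint_def scaleR_right_distrib)
    then have zC: "?z \<in> C" using convexD[OF cv y m, of "1/2" "1/2"] by simp
    have zr: "?z \<notin> rel_interior C" using nz rel_interior_nonempty_interior[OF ni] by simp
    obtain a where a0: "a \<noteq> 0" and ineq: "\<And>v. v \<in> C \<Longrightarrow> a \<bullet> ?z \<le> a \<bullet> v"
      and "\<And>v. v \<in> rel_interior C \<Longrightarrow> a \<bullet> ?z < a \<bullet> v"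
      using supporting_hyperplane_rel_boundary[OF cv zC zr] by metis
    have zy: "a \<bullet> ?z = (a \<bullet> y + a \<bullet> m) / 2"
      by (simp add: midpoint_def inner_add_right)
    have i1: "a \<bullet> ?z \<le> a \<bullet> y" using ineq[OF y] .
    have i2: "a \<bullet> ?z \<le> a \<bullet> m" using ineq[OF m] .
    have ey: "a \<bullet> y = a \<bullet> ?z" using i1 i2 zy by argo
    have em: "a \<bullet> m = a \<bullet> ?z" using i1 i2 zy by argo
    have "closed_segment y m \<subseteq> frontier C"
    proof
      fix v assume v: "v \<in> closed_segment y m"
      have vC: "v \<in> C" using closed_segment_subset[OF y m cv] v by auto
      obtain u where u: "0 \<le> u" "u \<le> 1" "v = (1 - u) *\<^sub>R y + u *\<^sub>R m"
        using v unfolding closed_segment_def by auto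
      have "a \<bullet> v = (1 - u) * (a \<bullet> y) + u * (a \<bullet> m)"
        unfolding u(3) by (simp add: inner_add_right)
      also have "\<dots> = (1 - u) * (a \<bullet> ?z) + u * (a \<bullet> ?z)" by (simp only: ey em)
      also have "\<dots> = a \<bullet> ?z" by (simp add: left_diff_distrib)
      finally have ev: "a \<bullet> v = a \<bullet> ?z" .
      have "v \<notin> interior C"
      proof
        assume "v \<in> interior C"
        then obtain e where e0: "e > 0" "ball v e \<subseteq> interior C"
          using open_contains_ball open_interior by blast
        then have e: "e > 0" "ball v e \<subseteq> C" using interior_subset by auto
        let ?w = "v - (e / 2 / norm a) *\<^sub>R a"
        have "dist v ?w < e" using e a0 by (simp add: dist_norm)
        then have "?w \<in> C" using e by auto
        moreover have w1: "a \<bullet> ?w = a \<bullet> v - (e / 2 / norm a) * (a \<bullet> a)"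
          by (simp add: inner_diff_right)
        have w2: "a \<bullet> a = norm a * norm a"
          by (simp add: dot_square_norm power2_eq_square)
        have w3: "(e / 2 / norm a) * (norm a * norm a) = e / 2 * norm a" using a0 by simp
        have w4: "a \<bullet> ?w = a \<bullet> v - e / 2 * norm a" using w1 unfolding w2 w3 .
        have "e / 2 * norm a > 0" using e a0 by simp
        then have "a \<bullet> ?w < a \<bullet> ?z" using ev w4 by linarith
        then show False using ineq[OF \<open>?w \<in> C\<close>] by linarith
      qed
      then show "v \<in> frontier C" using vC cl by (simp add: frontier_def closure_closed)
    qed
    then show False using sc ne by blast
  qed
qed


lemma aff_inv:
  fixes y w :: "'a::real_vector" assumes "\<mu> \<noteq> 0"
  shows "(1/\<mu>) *\<^sub>R (\<mu> *\<^sub>R y + (1-\<mu>) *\<^sub>R w) + (1 - 1/\<mu>) *\<^sub>R w = y"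
    and "\<mu> *\<^sub>R ((1/\<mu>) *\<^sub>R y + (1-1/\<mu>) *\<^sub>R w) + (1-\<mu>) *\<^sub>R w = y"
proof -
  have "(1/\<mu>) *\<^sub>R (\<mu> *\<^sub>R y + (1-\<mu>) *\<^sub>R w) + (1 - 1/\<mu>) *\<^sub>R w
      = ((1/\<mu>) * \<mu>) *\<^sub>R y + ((1/\<mu>) * (1-\<mu>) + (1 - 1/\<mu>)) *\<^sub>R w"
    by (simp add: scaleR_add_right scaleR_add_left)
  also have "(1/\<mu>) * \<mu> = 1" using assms by simp
  also have "(1/\<mu>) * (1-\<mu>) + (1 - 1/\<mu>) = 0" using assms by (simp add: field_simps)
  finally show "(1/\<mu>) *\<^sub>R (\<mu> *\<^sub>R y + (1-\<mu>) *\<^sub>R w) + (1 - 1/\<mu>) *\<^sub>R w = y" by simp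
  have "\<mu> *\<^sub>R ((1/\<mu>) *\<^sub>R y + (1-1/\<mu>) *\<^sub>R w) + (1-\<mu>) *\<^sub>R w
      = (\<mu> * (1/\<mu>)) *\<^sub>R y + (\<mu> * (1-1/\<mu>) + (1-\<mu>)) *\<^sub>R w"
    by (simp add: scaleR_add_right scaleR_add_left)
  also have "\<mu> * (1/\<mu>) = 1" using assms by simp
  also have "\<mu> * (1-1/\<mu>) + (1-\<mu>) = 0" using assms by (simp add: field_simps)
  finally show "\<mu> *\<^sub>R ((1/\<mu>) *\<^sub>R y + (1-1/\<mu>) *\<^sub>R w) + (1-\<mu>) *\<^sub>R w = y" by simp
qed


lemma hom_props:
  assumes sc: "strictly_convex_body C" and h: "is_homothet C D"
  shows "convex D" "compact D" "interior D \<noteq> {}" "MP D"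
proof -
  obtain l x where l: "l > 0" and D: "D = (\<lambda>v. l *\<^sub>R v + x) ` C"
    using h unfolding is_homothet_def by auto
  have cv: "convex C" and cp: "compact C" and ni: "interior C \<noteq> {}"
    using sc unfolding strictly_convex_body_def convex_body_def by auto
  have "D = (\<lambda>v. x + l *\<^sub>R v) ` C" unfolding D by (simp add: add.commute)
  then show "convex D" using convex_affinity[OF cv] by simp
  have "continuous_on C (\<lambda>v. l *\<^sub>R v + x)" by (intro continuous_intros)
  then show "compact D" unfolding D using compact_continuous_image cp by blast
  have sub: "(\<lambda>v. l *\<^sub>R v + x) ` interior C \<subseteq> interior D"
    unfolding D using int_img_aff1 l by simp
  then show "interior D \<noteq> {}" using ni by blast
  show "MP D" unfolding MP_def
  proof (intro allI impI)
    fix y m assume y: "y \<in> D" and m: "m \<in> D" and ne: "y \<noteq> m"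
    obtain y' m' where y': "y' \<in> C" "y = l *\<^sub>R y' + x" and m': "m' \<in> C" "m = l *\<^sub>R m' + x"
      using y m unfolding D by auto
    have "y' \<noteq> m'" using ne y' m' by auto
    then have "midpoint y' m' \<in> interior C" using MP_C[OF sc] y' m' unfolding MP_def by blast
    moreover have "midpoint y m = l *\<^sub>R midpoint y' m' + x"
    proof -
      have "midpoint y m = (1/2) *\<^sub>R (l *\<^sub>R (y' + m')) + (1/2) *\<^sub>R (x + x)"
        unfolding y'(2) m'(2) midpoint_def by (simp add: scaleR_add_right add_ac)
      also have "(1/2) *\<^sub>R (x + x) = x" by (simp add: scaleR_2[symmetric])
      finally show ?thesis by (simp add: midpoint_def)
    qed
    ultimately show "midpoint y m \<in> interior D" using sub by auto
  qed
qed

lemma shrink: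
  fixes H X :: "(real^2) set"
  assumes sc: "strictly_convex_body C" and hH: "is_homothet C H" and fX: "finite X"
    and XH: "X \<subseteq> H" and cX: "c \<in> X" and y0: "y0 \<in> X" "y0 \<noteq> c"
  shows "\<exists>K. is_homothet C K \<and> K \<subseteq> H \<and> X \<subseteq> K \<and> (\<exists>m\<in>X. m \<noteq> c \<and> m \<notin> interior K)
           \<and> (c \<notin> interior H \<longrightarrow> c \<notin> interior K)"
proof -
  have cvH: "convex H" and cpH: "compact H" using hom_props[OF sc hH] by auto
  have clH: "closed H" using cpH compact_imp_closed by auto
  define \<phi> where "\<phi> s y = c + (1/s) *\<^sub>R (y - c)" for s :: real and y :: "real^2"
  obtain B where B: "B > 0" "\<forall>v\<in>H. norm v \<le> B"
    using compact_imp_bounded[OF cpH] bounded_pos by blast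
  define \<epsilon> where "\<epsilon> = norm (y0 - c) / (2*B)"
  have \<epsilon>0: "\<epsilon> > 0" using y0 B by (simp add: \<epsilon>_def)
  have lowb: "\<epsilon> \<le> s" if s: "s > 0" "\<phi> s y0 \<in> H" for s
  proof -
    have "norm (\<phi> s y0 - c) \<le> norm (\<phi> s y0) + norm c" by (rule norm_triangle_ineq4)
    also have "\<dots> \<le> 2 * B" using B s(2) cX XH by (smt (verit, best) subsetD)
    finally have a: "norm (\<phi> s y0 - c) \<le> 2 * B" .
    have "norm (\<phi> s y0 - c) = norm (y0 - c) / s" using s(1) by (simp add: \<phi>_def)
    then have "norm (y0 - c) \<le> 2 * B * s" using a s(1) by (simp add: divide_le_eq)
    then show ?thesis unfolding \<epsilon>_def using B(1) by (simp add: pos_divide_le_eq mult.commute)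
  qed
  have \<phi>1: "\<phi> 1 y = y" for y by (simp add: \<phi>_def)
  define A where "A = {s. \<epsilon> \<le> s \<and> s \<le> 1 \<and> (\<forall>y\<in>X. \<phi> s y \<in> H)}"
  have e1: "\<epsilon> \<le> 1" using lowb[of 1] y0 XH by (auto simp: \<phi>1)
  have A1: "1 \<in> A" unfolding A_def using e1 XH by (auto simp: \<phi>1)
  have Aeq: "A = {\<epsilon>..1} \<inter> (\<Inter>y\<in>X. {\<epsilon>..1} \<inter> (\<lambda>s. \<phi> s y) -` H)"
    unfolding A_def by auto
  have cl_each: "closed ({\<epsilon>..1} \<inter> (\<lambda>s. \<phi> s y) -` H)" for y
  proof -
    have "continuous_on {\<epsilon>..1} (\<lambda>s. \<phi> s y)"
      unfolding \<phi>_def using \<epsilon>0 by (intro continuous_intros) auto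
    then show ?thesis using continuous_closed_preimage clH by blast
  qed
  have "closed A" unfolding Aeq
    by (rule closed_Int[OF closed_atLeastAtMost closed_INT]) (use cl_each in blast)
  have bA: "bdd_below A" unfolding A_def by (rule bdd_belowI[of _ \<epsilon>]) auto
  define s0 where "s0 = Inf A"
  have s0A: "s0 \<in> A" unfolding s0_def using closed_contains_Inf[OF _ bA \<open>closed A\<close>] A1 by auto
  have s0pos: "s0 > 0" and s01: "s0 \<le> 1" and s0X: "\<forall>y\<in>X. \<phi> s0 y \<in> H"
    using s0A \<epsilon>0 unfolding A_def by auto
  have s0le: "s0 \<le> s" if "s \<in> A" for s unfolding s0_def using cInf_lower[OF that bA] .
  define K where "K = (\<lambda>v. s0 *\<^sub>R v + (1 - s0) *\<^sub>R c) ` H"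
  have inv1: "s0 *\<^sub>R \<phi> s0 y + (1 - s0) *\<^sub>R c = y" for y
  proof -
    have "s0 *\<^sub>R \<phi> s0 y = s0 *\<^sub>R c + (y - c)" using s0pos by (simp add: \<phi>_def scaleR_add_right)
    then show ?thesis by (simp add: scaleR_diff_left)
  qed
  have KH: "K \<subseteq> H"
  proof
    fix z assume "z \<in> K"
    then obtain v where v: "v \<in> H" "z = s0 *\<^sub>R v + (1 - s0) *\<^sub>R c" unfolding K_def by auto
    show "z \<in> H" unfolding v(2) using convexD[OF cvH v(1), of c s0 "1 - s0"] cX XH s0pos s01 by auto
  qed
  have XK: "X \<subseteq> K"
  proof
    fix y assume "y \<in> X"
    then have "\<phi> s0 y \<in> H" using s0X by auto
    then show "y \<in> K" unfolding K_def using inv1[of y] by (metis image_eqI)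
  qed
  have hK: "is_homothet C K" unfolding K_def using hom_comp[OF hH s0pos] .
  have mem_int: "\<phi> s0 y \<in> interior H" if yK: "y \<in> interior K" for y
  proof -
    obtain y' where y': "y = s0 *\<^sub>R y' + (1 - s0) *\<^sub>R c" "y' \<in> interior H"
      using int_img_aff2[of s0 y "(1 - s0) *\<^sub>R c" H] yK s0pos unfolding K_def by auto
    have "s0 *\<^sub>R y' + (1 - s0) *\<^sub>R c - c = s0 *\<^sub>R (y' - c)"
      by (simp add: scaleR_diff_left scaleR_diff_right)
    then have "\<phi> s0 y = c + (1/s0) *\<^sub>R (s0 *\<^sub>R (y' - c))" unfolding y'(1) \<phi>_def by simp
    then have "\<phi> s0 y = y'" using s0pos by simp
    then show ?thesis using y'(2) by simp
  qed
  have ex: "\<exists>m\<in>X. m \<noteq> c \<and> m \<notin> interior K"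
  proof (rule ccontr)
    assume "\<not> ?thesis"
    then have allint: "\<forall>y\<in>X. y \<noteq> c \<longrightarrow> \<phi> s0 y \<in> interior H" using mem_int by blast
    have "\<forall>y\<in>X. eventually (\<lambda>s. \<phi> s y \<in> H) (at_left s0)"
    proof
      fix y assume yX: "y \<in> X"
      show "eventually (\<lambda>s. \<phi> s y \<in> H) (at_left s0)"
      proof (cases "y = c")
        case True
        then have "\<phi> s y \<in> H" for s using cX XH by (auto simp: \<phi>_def)
        then show ?thesis by simp
      next
        case False
        have "((\<lambda>s. \<phi> s y) \<longlongrightarrow> \<phi> s0 y) (at_left s0)"
          unfolding \<phi>_def using s0pos by (intro tendsto_intros) auto
        moreover have "\<phi> s0 y \<in> interior H" using allint yX False by blast
        ultimately have "eventually (\<lambda>s. \<phi> s y \<in> interior H) (at_left s0)"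
          by (rule topological_tendstoD[OF _ open_interior])
        then show ?thesis by (rule eventually_mono) (use interior_subset in auto)
      qed
    qed
    then have "eventually (\<lambda>s. \<forall>y\<in>X. \<phi> s y \<in> H) (at_left s0)"
      by (rule eventually_ball_finite[OF fX])
    moreover have "eventually (\<lambda>s. s \<in> {0<..<s0}) (at_left s0)"
      by (rule eventually_at_left_real[OF s0pos])
    ultimately have "eventually (\<lambda>s. (\<forall>y\<in>X. \<phi> s y \<in> H) \<and> s \<in> {0<..<s0}) (at_left s0)"
      by (rule eventually_conj)
    then have "\<exists>s. (\<forall>y\<in>X. \<phi> s y \<in> H) \<and> s \<in> {0<..<s0}"
      by (rule eventually_happens'[rotated]) simp
    then obtain s where s: "\<forall>y\<in>X. \<phi> s y \<in> H" "0 < s" "s < s0" by auto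
    have "\<epsilon> \<le> s" using lowb[of s] s y0 by auto
    then have "s \<in> A" unfolding A_def using s s01 by auto
    then show False using s0le s by fastforce
  qed
  have "\<phi> s0 c = c" by (simp add: \<phi>_def)
  then have "c \<notin> interior H \<longrightarrow> c \<notin> interior K"
    using mem_int[of c] by auto
  then show ?thesis using hK KH XK ex by blast
qed



lemma ext2:
  fixes H X :: "(real^2) set"
  assumes sc: "strictly_convex_body C" and hH: "is_homothet C H" and fX: "finite X"
    and XH: "X \<subseteq> H" and c: "c \<in> X" and y0: "y0 \<in> X" "y0 \<noteq> c"
  shows "\<exists>K m1 m2. is_homothet C K \<and> K \<subseteq> H \<and> X \<subseteq> K \<and> m1 \<in> X \<and> m2 \<in> X \<and> m1 \<noteq> m2
           \<and> m1 \<notin> interior K \<and> m2 \<notin> interior K"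
proof -
  obtain K1 m where K1: "is_homothet C K1" "K1 \<subseteq> H" "X \<subseteq> K1" and m: "m \<in> X" "m \<noteq> c" "m \<notin> interior K1"
    using shrink[OF sc hH fX XH c y0] by blast
  obtain K2 m' where K2: "is_homothet C K2" "K2 \<subseteq> K1" "X \<subseteq> K2"
    and m': "m' \<in> X" "m' \<noteq> m" "m' \<notin> interior K2" and mm: "m \<notin> interior K1 \<longrightarrow> m \<notin> interior K2"
    using shrink[OF sc K1(1) fX K1(3) m(1) c m(2)[symmetric]] by blast
  show ?thesis using K1 K2 m m' mm by blast
qed

lemma comb_id:
  fixes y m a :: "'a::real_vector"
  shows "(1 - 2*k) *\<^sub>R y + (2*k) *\<^sub>R (midpoint y m - d *\<^sub>R a)
       = (1-k) *\<^sub>R y + k *\<^sub>R (m - (2*d) *\<^sub>R a)"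
proof -
  have e1: "(2*k) *\<^sub>R (midpoint y m - d *\<^sub>R a) = k *\<^sub>R y + k *\<^sub>R m - (2*k*d) *\<^sub>R a"
    by (simp add: midpoint_def scaleR_diff_right scaleR_add_right)
  have e2: "(1 - 2*k) *\<^sub>R y + k *\<^sub>R y = ((1 - 2*k) + k) *\<^sub>R y"
    by (simp only: scaleR_left_distrib)
  have e3: "(1 - 2*k) + k = 1 - k" by simp
  have e4: "k *\<^sub>R (m - (2*d) *\<^sub>R a) = k *\<^sub>R m - (2*k*d) *\<^sub>R a"
    by (simp add: scaleR_diff_right mult.assoc mult.left_commute)
  show ?thesis unfolding e1 e4 using e2 e3 by (simp add: algebra_simps)
qed

lemma drop:
  fixes D S :: "(real^2) set"
  assumes sc: "strictly_convex_body C" and hD: "is_homothet C D" and fS: "finite S"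
    and mD: "m \<in> D" and mi: "m \<notin> interior D"
  shows "\<exists>E. is_homothet C E \<and> E \<inter> S = D \<inter> S - {m}"
proof -
  have cv: "convex D" and cp: "compact D" and ni: "interior D \<noteq> {}" and mp: "MP D"
    using hom_props[OF sc hD] by auto
  have cl: "closed D" using cp compact_imp_closed by auto
  have zr: "m \<notin> rel_interior D" using mi rel_interior_nonempty_interior[OF ni] by simp
  obtain a where a0: "a \<noteq> 0" and ineq: "\<And>v. v \<in> D \<Longrightarrow> a \<bullet> m \<le> a \<bullet> v"
    using supporting_hyperplane_rel_boundary[OF cv mD zr] by metis
  define F where "F = D \<inter> S - {m}"
  have fF: "finite F" using fS unfolding F_def by auto
  have "\<forall>y\<in>F. eventually (\<lambda>\<delta>. midpoint y m - \<delta> *\<^sub>R a \<in> interior D) (at_right 0)"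
  proof
    fix y assume yF: "y \<in> F"
    have "((\<lambda>\<delta>. midpoint y m - \<delta> *\<^sub>R a) \<longlongrightarrow> midpoint y m - (0::real) *\<^sub>R a) (at_right 0)"
      by (intro tendsto_intros)
    then have t: "((\<lambda>\<delta>. midpoint y m - \<delta> *\<^sub>R a) \<longlongrightarrow> midpoint y m) (at_right 0)" by simp
    have "midpoint y m \<in> interior D" using mp yF mD unfolding MP_def F_def by blast
    then show "eventually (\<lambda>\<delta>. midpoint y m - \<delta> *\<^sub>R a \<in> interior D) (at_right 0)"
      by (rule topological_tendstoD[OF t open_interior])
  qed
  then have "eventually (\<lambda>\<delta>. \<forall>y\<in>F. midpoint y m - \<delta> *\<^sub>R a \<in> interior D) (at_right 0)"
    by (rule eventually_ball_finite[OF fF])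
  moreover have "eventually (\<lambda>\<delta>. \<delta> \<in> {0<..<1}) (at_right (0::real))"
    by (rule eventually_at_right_real) simp
  ultimately have "eventually (\<lambda>\<delta>. (\<forall>y\<in>F. midpoint y m - \<delta> *\<^sub>R a \<in> interior D) \<and> \<delta> \<in> {0<..<1}) (at_right 0)"
    by (rule eventually_conj)
  then have "\<exists>\<delta>. (\<forall>y\<in>F. midpoint y m - \<delta> *\<^sub>R a \<in> interior D) \<and> \<delta> \<in> {0<..<1}"
    by (rule eventually_happens'[rotated]) simp
  then obtain \<delta> where \<delta>: "\<forall>y\<in>F. midpoint y m - \<delta> *\<^sub>R a \<in> D" "\<delta> > 0"
    using interior_subset by fastforce
  define w where "w = m - (2 * \<delta>) *\<^sub>R a"
  have "\<forall>s\<in>S - D. eventually (\<lambda>\<kappa>. (1 - \<kappa>) *\<^sub>R s + \<kappa> *\<^sub>R w \<in> - D) (at_right 0)"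
  proof
    fix s assume sS: "s \<in> S - D"
    have "((\<lambda>\<kappa>. (1 - \<kappa>) *\<^sub>R s + \<kappa> *\<^sub>R w) \<longlongrightarrow> (1 - (0::real)) *\<^sub>R s + (0::real) *\<^sub>R w) (at_right 0)"
      by (intro tendsto_intros)
    then have t: "((\<lambda>\<kappa>. (1 - \<kappa>) *\<^sub>R s + \<kappa> *\<^sub>R w) \<longlongrightarrow> s) (at_right 0)" by simp
    have "open (- D)" using cl by auto
    moreover have "s \<in> - D" using sS by auto
    ultimately show "eventually (\<lambda>\<kappa>. (1 - \<kappa>) *\<^sub>R s + \<kappa> *\<^sub>R w \<in> - D) (at_right 0)"
      by (rule topological_tendstoD[OF t])
  qed
  then have "eventually (\<lambda>\<kappa>. \<forall>s\<in>S - D. (1 - \<kappa>) *\<^sub>R s + \<kappa> *\<^sub>R w \<in> - D) (at_right 0)"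
    by (rule eventually_ball_finite[rotated]) (use fS in auto)
  moreover have "eventually (\<lambda>\<kappa>. \<kappa> \<in> {0<..<1/2}) (at_right (0::real))"
    by (rule eventually_at_right_real) simp
  ultimately have "eventually (\<lambda>\<kappa>. (\<forall>s\<in>S - D. (1 - \<kappa>) *\<^sub>R s + \<kappa> *\<^sub>R w \<in> - D) \<and> \<kappa> \<in> {0<..<1/2}) (at_right 0)"
    by (rule eventually_conj)
  then have "\<exists>\<kappa>. (\<forall>s\<in>S - D. (1 - \<kappa>) *\<^sub>R s + \<kappa> *\<^sub>R w \<in> - D) \<and> \<kappa> \<in> {0<..<1/2}"
    by (rule eventually_happens'[rotated]) simp
  then obtain \<kappa> where \<kappa>: "\<forall>s\<in>S - D. (1 - \<kappa>) *\<^sub>R s + \<kappa> *\<^sub>R w \<notin> D" "0 < \<kappa>" "\<kappa> < 1/2"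
    by auto
  define \<mu> where "\<mu> = 1 - \<kappa>"
  have \<mu>0: "\<mu> > 0" "\<mu> \<noteq> 0" using \<kappa> unfolding \<mu>_def by auto
  define E where "E = (\<lambda>v. (1/\<mu>) *\<^sub>R v + (1 - 1/\<mu>) *\<^sub>R w) ` D"
  have memE: "y \<in> E \<longleftrightarrow> \<mu> *\<^sub>R y + (1 - \<mu>) *\<^sub>R w \<in> D" for y
  proof
    assume "y \<in> E"
    then obtain v where v: "v \<in> D" "y = (1/\<mu>) *\<^sub>R v + (1 - 1/\<mu>) *\<^sub>R w" unfolding E_def by auto
    show "\<mu> *\<^sub>R y + (1 - \<mu>) *\<^sub>R w \<in> D" unfolding v(2) aff_inv(2)[OF \<mu>0(2)] using v(1) .
  next
    assume "\<mu> *\<^sub>R y + (1 - \<mu>) *\<^sub>R w \<in> D"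
    then show "y \<in> E" unfolding E_def using aff_inv(1)[OF \<mu>0(2), of y w] by (metis image_eqI)
  qed
  have hE: "is_homothet C E" unfolding E_def by (rule hom_comp[OF hD]) (use \<mu>0 in simp)
  have "E \<inter> S = F"
  proof (intro set_eqI iffI)
    fix y assume yE: "y \<in> E \<inter> S"
    then have yin: "(1 - \<kappa>) *\<^sub>R y + \<kappa> *\<^sub>R w \<in> D" using memE unfolding \<mu>_def by auto
    have "y \<in> D" using yin \<kappa>(1) yE by blast
    moreover have "y \<noteq> m"
    proof
      assume ym: "y = m"
      have "(1 - \<kappa>) *\<^sub>R m + \<kappa> *\<^sub>R w = m - (2 * \<delta> * \<kappa>) *\<^sub>R a"
        unfolding w_def by (simp add: scaleR_diff_right scaleR_diff_left)
      then have "a \<bullet> ((1 - \<kappa>) *\<^sub>R m + \<kappa> *\<^sub>R w) = a \<bullet> m - (2 * \<delta> * \<kappa>) * (a \<bullet> a)"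
        by (simp add: inner_diff_right)
      moreover have "a \<bullet> a > 0" using a0 by simp
      moreover have "2 * \<delta> * \<kappa> > 0" using \<delta> \<kappa> by simp
      ultimately have "a \<bullet> ((1 - \<kappa>) *\<^sub>R m + \<kappa> *\<^sub>R w) < a \<bullet> m" by simp
      then show False using ineq yin ym by fastforce
    qed
    ultimately show "y \<in> F" using yE unfolding F_def by auto
  next
    fix y assume yF: "y \<in> F"
    have yD: "y \<in> D" and yS: "y \<in> S" using yF unfolding F_def by auto
    let ?z = "midpoint y m - \<delta> *\<^sub>R a"
    have zD: "?z \<in> D" using \<delta> yF by auto
    have "(1 - 2 * \<kappa>) *\<^sub>R y + (2 * \<kappa>) *\<^sub>R ?z = (1 - \<kappa>) *\<^sub>R y + \<kappa> *\<^sub>R w"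
      unfolding w_def by (rule comb_id)
    moreover have "(1 - 2 * \<kappa>) *\<^sub>R y + (2 * \<kappa>) *\<^sub>R ?z \<in> D"
      using convexD[OF cv yD zD, of "1 - 2 * \<kappa>" "2 * \<kappa>"] \<kappa> by simp
    ultimately have "\<mu> *\<^sub>R y + (1 - \<mu>) *\<^sub>R w \<in> D" unfolding \<mu>_def by simp
    then show "y \<in> E \<inter> S" using memE yS by auto
  qed
  then show ?thesis using hE unfolding F_def by blast
qed



definition Rel :: "(real^2) set \<Rightarrow> (real^2) set \<Rightarrow> (real^2) set \<Rightarrow> real^2 \<Rightarrow> real^2 \<Rightarrow> bool" where
  "Rel C S X u v \<longleftrightarrow> u \<in> X \<and> v \<in> X \<and> delaunay_adj C S u v"

lemma Rel_mono: "X \<subseteq> Y \<Longrightarrow> (Rel C S X)\<^sup>*\<^sup>* u v \<Longrightarrow> (Rel C S Y)\<^sup>*\<^sup>* u v"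
proof -
  assume XY: "X \<subseteq> Y" and r: "(Rel C S X)\<^sup>*\<^sup>* u v"
  have "Rel C S X \<le> Rel C S Y" using XY unfolding Rel_def by auto
  then show ?thesis using rtranclp_mono r by blast
qed

lemma conn:
  assumes sc: "strictly_convex_body C" and fS: "finite S"
  shows "is_homothet C H \<Longrightarrow> a \<in> H \<inter> S \<Longrightarrow> b \<in> H \<inter> S \<Longrightarrow> (Rel C S (H \<inter> S))\<^sup>*\<^sup>* a b"
proof (induction "card (H \<inter> S)" arbitrary: H a b rule: less_induct)
  case less
  define X where "X = H \<inter> S"
  have fX: "finite X" using fS unfolding X_def by auto
  have aX: "a \<in> X" and bX: "b \<in> X" using less.prems unfolding X_def by auto
  show ?case
  proof (cases "a = b")
    case True
    then show ?thesis by simp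
  next
    case ab: False
    show ?thesis
    proof (cases "X = {a, b}")
      case True
      have "delaunay_adj C S a b"
        unfolding delaunay_adj_def using aX bX ab True less.prems(1) unfolding X_def by auto
      then have "Rel C S X a b" unfolding Rel_def using aX bX by auto
      then show ?thesis unfolding X_def by auto
    next
      case False
      then obtain z where zX: "z \<in> X" and za: "z \<noteq> a" and zb: "z \<noteq> b" using aX bX by auto
      obtain K m1 m2 where K: "is_homothet C K" "K \<subseteq> H" "X \<subseteq> K"
        and m: "m1 \<in> X" "m2 \<in> X" "m1 \<noteq> m2" "m1 \<notin> interior K" "m2 \<notin> interior K"
        using ext2[OF sc less.prems(1) fX _ aX bX ab[symmetric]] unfolding X_def by blast
      have KS: "K \<inter> S = X" using K unfolding X_def by auto
      have mK: "m1 \<in> K" "m2 \<in> K" using m K by auto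
      obtain E1 where E1: "is_homothet C E1" "E1 \<inter> S = X - {m1}"
        using drop[OF sc K(1) fS mK(1) m(4)] KS by auto
      obtain E2 where E2: "is_homothet C E2" "E2 \<inter> S = X - {m2}"
        using drop[OF sc K(1) fS mK(2) m(5)] KS by auto
      have c1: "card (E1 \<inter> S) < card (H \<inter> S)" unfolding E1(2) X_def[symmetric]
        using card_Diff1_less[OF fX m(1)] .
      have c2: "card (E2 \<inter> S) < card (H \<inter> S)" unfolding E2(2) X_def[symmetric]
        using card_Diff1_less[OF fX m(2)] .
      have pathE: "(Rel C S X)\<^sup>*\<^sup>* u v"
        if "u \<in> X" "v \<in> X" "(u \<noteq> m1 \<and> v \<noteq> m1) \<or> (u \<noteq> m2 \<and> v \<noteq> m2)" for u v
      proof (cases "u \<noteq> m1 \<and> v \<noteq> m1")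
        case True
        then have "(Rel C S (E1 \<inter> S))\<^sup>*\<^sup>* u v" using less.hyps[OF c1 E1(1)] that E1(2) by auto
        then show ?thesis using Rel_mono[of "E1 \<inter> S" X] E1(2) by auto
      next
        case False
        then have "u \<noteq> m2 \<and> v \<noteq> m2" using that by auto
        then have "(Rel C S (E2 \<inter> S))\<^sup>*\<^sup>* u v" using less.hyps[OF c2 E2(1)] that E2(2) by auto
        then show ?thesis using Rel_mono[of "E2 \<inter> S" X] E2(2) by auto
      qed
      obtain z' where z': "z' \<in> X" "z' \<noteq> m1" "z' \<noteq> m2"
        using aX bX zX za zb ab by (metis)
      have "(Rel C S X)\<^sup>*\<^sup>* a z'" using pathE[OF aX z'(1)] z' m(3) by blast
      moreover have "(Rel C S X)\<^sup>*\<^sup>* z' b" using pathE[OF z'(1) bX] z' m(3) by blast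
      ultimately show ?thesis unfolding X_def by (rule rtranclp_trans)
    qed
  qed
qed

lemma rel_list:
  assumes "(Rel C S X)\<^sup>*\<^sup>* a b" "a \<in> X"
  shows "\<exists>xs. xs \<noteq> [] \<and> hd xs = a \<and> last xs = b \<and> set xs \<subseteq> X \<and>
           (\<forall>i. Suc i < length xs \<longrightarrow> delaunay_adj C S (xs ! i) (xs ! Suc i))"
  using assms(1)
proof (induction rule: rtranclp_induct)
  case base
  then show ?case using assms(2) by (intro exI[of _ "[a]"]) auto
next
  case (step b c)
  then obtain xs where xs: "xs \<noteq> []" "hd xs = a" "last xs = b" "set xs \<subseteq> X"
    "\<forall>i. Suc i < length xs \<longrightarrow> delaunay_adj C S (xs ! i) (xs ! Suc i)" by blast
  have bc: "delaunay_adj C S b c" "c \<in> X" using step(2) unfolding Rel_def by auto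
  have "\<forall>i. Suc i < length (xs @ [c]) \<longrightarrow> delaunay_adj C S ((xs @ [c]) ! i) ((xs @ [c]) ! Suc i)"
  proof (intro allI impI)
    fix i assume i: "Suc i < length (xs @ [c])"
    show "delaunay_adj C S ((xs @ [c]) ! i) ((xs @ [c]) ! Suc i)"
    proof (cases "Suc i < length xs")
      case True
      then show ?thesis using xs(5) by (simp add: nth_append)
    next
      case False
      then have si: "Suc i = length xs" using i by simp
      then have ii: "i = length xs - 1" by simp
      have "(xs @ [c]) ! i = last xs" using xs(1) si unfolding ii
        by (simp add: nth_append last_conv_nth)
      moreover have "(xs @ [c]) ! Suc i = c" using si by (simp add: nth_append)
      ultimately show ?thesis using bc xs(3) by simp
    qed
  qed
  then show ?case using xs bc by (intro exI[of _ "xs @ [c]"]) auto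
qed

theorem mainTheorem18:
  fixes C C' S :: "(real^2) set" and p q :: "real^2"
  assumes "strictly_convex_body C"
    and "finite S"
    and "C_general_position C S"
    and "is_homothet C C'"
    and "p \<noteq> q"
    and "frontier C' \<inter> S = {p, q}"
  shows "\<exists>xs. xs \<noteq> [] \<and> hd xs = p \<and> last xs = q \<and> set xs \<subseteq> S \<and>
           (\<forall>i. Suc i < length xs \<longrightarrow>
              delaunay_adj C S (xs ! i) (xs ! Suc i) \<and>
              closed_segment (xs ! i) (xs ! Suc i) \<subseteq> C')"
proof -
  have cv: "convex C'" and cp: "compact C'" using hom_props[OF assms(1) assms(4)] by auto
  have "frontier C' \<subseteq> C'" using cp compact_imp_closed frontier_subset_closed by blast
  then have pq: "p \<in> C' \<inter> S" "q \<in> C' \<inter> S" using assms(6) by auto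
  have "(Rel C S (C' \<inter> S))\<^sup>*\<^sup>* p q" using conn[OF assms(1) assms(2) assms(4) pq] .
  then obtain xs where xs: "xs \<noteq> []" "hd xs = p" "last xs = q" "set xs \<subseteq> C' \<inter> S"
    "\<forall>i. Suc i < length xs \<longrightarrow> delaunay_adj C S (xs ! i) (xs ! Suc i)"
    using rel_list[of C S "C' \<inter> S" p q] pq(1) by blast
  have "\<forall>i. Suc i < length xs \<longrightarrow> closed_segment (xs ! i) (xs ! Suc i) \<subseteq> C'"
  proof (intro allI impI)
    fix i assume i: "Suc i < length xs"
    have "xs ! i \<in> C'" "xs ! Suc i \<in> C'" using xs(4) i nth_mem[of i xs] nth_mem[of "Suc i" xs] by auto
    then show "closed_segment (xs ! i) (xs ! Suc i) \<subseteq> C'" using closed_segment_subset cv by blast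
  qed
  then show ?thesis using xs by blast
qed


end
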